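(* Let $n\equiv 0 \pmod 4$ with $n\ge 8$, and suppose there exists a reverse Gray code for the permutations of $\{1,\ldots,n-3\}$. Then there exists a reverse Gray code $\pi_0,\ldots,\pi_{n!-1}$ for the permutations of $\{1,\ldots,n\}$ with property $P$.
   Context: A reverse Gray code for the permutations of $\{1,\ldots,m\}$ is a listing $\pi_0,\ldots,\pi_{m!-1}$ of all permutations of $\{1,\ldots,m\}$ written as words, such that consecutive permutations differ by interchanging the symbols in two adjacent positions, and $\pi_{i+m!/2}$ is the reversal of $\pi_i$ (the word read backwards) for all $0\le i<m!/2$. Such a code has property $P$ if $\pi_0=12\cdots m$ (so $\pi_{m!/2}=m(m-1)\cdots 21$) and the four permutations immediately preceding $\pi_{m!/2}$ are, in order, $\pi_{m!/2-4}=(m-1)(m-2)(m-3)\,m\,(m-4)\cdots 3\,1\,2$, $\pi_{m!/2-3}=(m-1)(m-2)\,m\,(m-3)(m-4)\cdots 3\,1\,2$, $\pi_{m!/2-2}=(m-1)\,m\,(m-2)(m-3)(m-4)\cdots 3\,1\,2$, $\pi_{m!/2-1}=m(m-1)(m-2)(m-3)(m-4)\cdots 3\,1\,2$; i.e. the symbols $1,\ldots,m-1$ appear in the order $(m-1)(m-2)\cdots 3\,1\,2$ and the symbol $m$ moves from the fourth position to the first. *)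

theory Defs
  imports Main
begin

definition is_perm_word :: "nat \<Rightarrow> nat list \<Rightarrow> bool" where
  "is_perm_word m w \<longleftrightarrow> distinct w \<and> set w = {1..m}"

definition adj_transp :: "nat list \<Rightarrow> nat list \<Rightarrow> bool" where
  "adj_transp w v \<longleftrightarrow> (\<exists>i. Suc i < length w \<and>
      v = w[i := w ! Suc i, Suc i := w ! i])"

definition reverse_gray_code :: "nat \<Rightarrow> nat list list \<Rightarrow> bool" where
  "reverse_gray_code m L \<longleftrightarrow>
     length L = fact m \<and> distinct L \<and> (\<forall>w \<in> set L. is_perm_word m w) \<and>
     (\<forall>w. is_perm_word m w \<longrightarrow> w \<in> set L) \<and>
     (\<forall>i. Suc i < length L \<longrightarrow> adj_transp (L ! i) (L ! Suc i)) \<and>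
     (\<forall>i < fact m div 2. L ! (i + fact m div 2) = rev (L ! i))"

definition P_base :: "nat \<Rightarrow> nat list" where
  "P_base m = rev [3..<m] @ [1, 2]"

definition property_P :: "nat \<Rightarrow> nat list list \<Rightarrow> bool" where
  "property_P m L \<longleftrightarrow>
     L ! 0 = [1..<Suc m] \<and>
     (\<forall>k < 4. L ! (fact m div 2 - 1 - k) = take k (P_base m) @ m # drop k (P_base m))"

end

theory Submission
  imports Defs "HOL-Combinatorics.Multiset_Permutations"
begin

definition ins :: "nat \<Rightarrow> nat \<Rightarrow> nat list \<Rightarrow> nat list" where
  "ins p x w = take p w @ x # drop p w"

lemma ins_0[simp]: "ins 0 x w = x # w" by (simp add: ins_def)
lemma ins_end: "length w = p \<Longrightarrow> ins p x w = w @ [x]" by (simp add: ins_def)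
lemma length_ins[simp]: "length (ins p x w) = Suc (length w)" by (simp add: ins_def)
lemma set_ins[simp]: "set (ins p x w) = insert x (set w)"
  by (simp add: ins_def) (metis Un_insert_right append_take_drop_id set_append)
lemma distinct_ins[simp]: "distinct (ins p x w) \<longleftrightarrow> x \<notin> set w \<and> distinct w"
proof -
  have d: "distinct w \<longleftrightarrow> distinct (take p w @ drop p w)" by simp
  have s: "set w = set (take p w) \<union> set (drop p w)" by (metis append_take_drop_id set_append)
  show ?thesis unfolding ins_def d distinct_append using s by auto
qed
lemma filter_ins[simp]: "\<not> P x \<Longrightarrow> filter P (ins p x w) = filter P w"
  by (simp add: ins_def) (metis filter_append append_take_drop_id)
lemma removeAll_ins: "x \<notin> set w \<Longrightarrow> removeAll x (ins p x w) = w"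
proof -
  assume a: "x \<notin> set w"
  have "x \<notin> set (take p w)" "x \<notin> set (drop p w)" using a by (auto dest: in_set_takeD in_set_dropD)
  then show ?thesis by (simp add: ins_def)
qed
lemma takeWhile_ins: "x \<notin> set w \<Longrightarrow> takeWhile (\<lambda>y. y \<noteq> x) (ins p x w) = take p w"
proof -
  assume a: "x \<notin> set w"
  have "\<forall>z\<in>set (take p w). z \<noteq> x" using a by (auto dest: in_set_takeD)
  then show ?thesis by (simp add: ins_def takeWhile_append2)
qed
lemma ins_inj:
  assumes "x \<notin> set w" "x \<notin> set v" "p \<le> length w" "q \<le> length v" "ins p x w = ins q x v"
  shows "p = q \<and> w = v"
proof -
  have wv: "w = v" using assms removeAll_ins by metis
  have "take p w = take q v" using assms takeWhile_ins by metis
  moreover have "p = length (take p w)" using assms(3) by simp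
  moreover have "q = length (take q v)" using assms(4) by simp
  ultimately have "p = q" by simp
  with wv show ?thesis by simp
qed

lemma ins_comm: "r \<le> p \<Longrightarrow> p \<le> length w \<Longrightarrow> ins (Suc p) y (ins r x w) = ins r x (ins p y w)"
proof -
  assume a: "r \<le> p" "p \<le> length w"
  have 1: "take (Suc p) (take r w @ x # drop r w) = take r w @ x # take (p - r) (drop r w)"
    using a by (simp add: take_append min_def Suc_diff_le)
  have 2: "drop (Suc p) (take r w @ x # drop r w) = drop p w"
    using a by (simp add: drop_append min_def Suc_diff_le)
  have 3: "take r (take p w @ y # drop p w) = take r w" using a by (simp add: take_append min_def)
  have 4: "drop r (take p w @ y # drop p w) = drop r (take p w) @ y # drop p w" using a by (simp add: drop_append min_def)
  have 5: "drop r (take p w) = take (p - r) (drop r w)" by (rule drop_take)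
  show ?thesis unfolding ins_def 1 2 3 4 5 by simp
qed

lemma adj_length: "adj_transp w v \<Longrightarrow> length v = length w"
  by (auto simp: adj_transp_def)
lemma swap_twice: "Suc i < length w \<Longrightarrow> (let v = w[i := w ! Suc i, Suc i := w ! i] in v[i := v ! Suc i, Suc i := v ! i]) = w"
  by (simp add: Let_def nth_list_update list_update_swap[of i "Suc i"])
lemma adj_sym: "adj_transp w v \<Longrightarrow> adj_transp v w"
proof -
  assume "adj_transp w v"
  then obtain i where i: "Suc i < length w" "v = w[i := w ! Suc i, Suc i := w ! i]" by (auto simp: adj_transp_def)
  then have "w = v[i := v ! Suc i, Suc i := v ! i]" using swap_twice[OF i(1)] by (simp add: Let_def)
  moreover have "Suc i < length v" using i by simp
  ultimately show ?thesis unfolding adj_transp_def by blast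
qed

lemma adj_nth: "adj_transp w v \<longleftrightarrow> (\<exists>i. Suc i < length w \<and> length v = length w \<and>
   v ! i = w ! Suc i \<and> v ! Suc i = w ! i \<and> (\<forall>k<length w. k \<noteq> i \<and> k \<noteq> Suc i \<longrightarrow> v ! k = w ! k))"
proof
  assume "adj_transp w v"
  then obtain i where i: "Suc i < length w" "v = w[i := w ! Suc i, Suc i := w ! i]" by (auto simp: adj_transp_def)
  then show "\<exists>i. Suc i < length w \<and> length v = length w \<and>
   v ! i = w ! Suc i \<and> v ! Suc i = w ! i \<and> (\<forall>k<length w. k \<noteq> i \<and> k \<noteq> Suc i \<longrightarrow> v ! k = w ! k)"
    by (intro exI[of _ i]) (auto simp: nth_list_update)
next
  assume "\<exists>i. Suc i < length w \<and> length v = length w \<and>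
   v ! i = w ! Suc i \<and> v ! Suc i = w ! i \<and> (\<forall>k<length w. k \<noteq> i \<and> k \<noteq> Suc i \<longrightarrow> v ! k = w ! k)"
  then obtain i where i: "Suc i < length w" "length v = length w"
   "v ! i = w ! Suc i" "v ! Suc i = w ! i" "\<forall>k<length w. k \<noteq> i \<and> k \<noteq> Suc i \<longrightarrow> v ! k = w ! k" by blast
  have "v = w[i := w ! Suc i, Suc i := w ! i]"
    by (rule nth_equalityI) (use i in \<open>auto simp: nth_list_update\<close>)
  then show "adj_transp w v" using i(1) unfolding adj_transp_def by blast
qed

lemma adj_ctx: "adj_transp w v \<Longrightarrow> adj_transp (us @ w @ vs) (us @ v @ vs)"
proof -
  assume "adj_transp w v"
  then obtain i where i: "Suc i < length w" "length v = length w"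
   "v ! i = w ! Suc i" "v ! Suc i = w ! i" "\<forall>k<length w. k \<noteq> i \<and> k \<noteq> Suc i \<longrightarrow> v ! k = w ! k"
    unfolding adj_nth by blast
  show ?thesis unfolding adj_nth
  proof (intro exI[of _ "length us + i"] conjI allI impI)
    fix k assume k: "k < length (us @ w @ vs)" "k \<noteq> length us + i \<and> k \<noteq> Suc (length us + i)"
    show "(us @ v @ vs) ! k = (us @ w @ vs) ! k"
    proof (cases "k < length us")
      case True then show ?thesis by (simp add: nth_append)
    next
      case False
      then obtain t where t: "k = length us + t" by (metis le_add_diff_inverse not_less)
      show ?thesis
      proof (cases "t < length w")
        case True then show ?thesis using t k i by (simp add: nth_append)
      next
        case False then show ?thesis using t k i by (simp add: nth_append)
      qed
    qed
  qed (use i in \<open>auto simp: nth_append\<close>)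
qed

lemma adj_Cons: "adj_transp w v \<Longrightarrow> adj_transp (x # w) (x # v)"
  using adj_ctx[of w v "[x]" "[]"] by simp
lemma adj_snoc: "adj_transp w v \<Longrightarrow> adj_transp (w @ [x]) (v @ [x])"
  using adj_ctx[of w v "[]" "[x]"] by simp

lemma adj_rev: "adj_transp w v \<Longrightarrow> adj_transp (rev w) (rev v)"
proof -
  assume "adj_transp w v"
  then obtain i where i: "Suc i < length w" "length v = length w"
   "v ! i = w ! Suc i" "v ! Suc i = w ! i" "\<forall>k<length w. k \<noteq> i \<and> k \<noteq> Suc i \<longrightarrow> v ! k = w ! k"
    unfolding adj_nth by blast
  define l where "l = length w"
  show ?thesis unfolding adj_nth
  proof (intro exI[of _ "l - 2 - i"] conjI allI impI)
    fix k assume k: "k < length (rev w)" "k \<noteq> l - 2 - i \<and> k \<noteq> Suc (l - 2 - i)"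
    then have "l - Suc k \<noteq> i" "l - Suc k \<noteq> Suc i" "l - Suc k < l" using i(1) unfolding l_def by auto
    then show "rev v ! k = rev w ! k" using k i by (simp add: rev_nth l_def)
  next
    show "rev v ! (l - 2 - i) = rev w ! Suc (l - 2 - i)" using i
      by (simp add: rev_nth l_def Suc_diff_Suc numeral_2_eq_2)
    show "rev v ! Suc (l - 2 - i) = rev w ! (l - 2 - i)" using i
      by (simp add: rev_nth l_def Suc_diff_Suc numeral_2_eq_2)
  qed (use i in \<open>auto simp: l_def\<close>)
qed

lemma adj_map: "adj_transp w v \<Longrightarrow> adj_transp (map f w) (map f v)"
  unfolding adj_transp_def by (auto simp: map_update)

lemma adj_ins_step: "p < length w \<Longrightarrow> adj_transp (ins p x w) (ins (Suc p) x w)"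
proof -
  assume p: "p < length w"
  have 1: "ins p x w = take p w @ [x, w ! p] @ drop (Suc p) w"
    using p by (simp add: ins_def Cons_nth_drop_Suc)
  have 2: "ins (Suc p) x w = take p w @ [w ! p, x] @ drop (Suc p) w"
    using p by (simp add: ins_def take_Suc_conv_app_nth)
  have "adj_transp [x, w ! p] [w ! p, x]" unfolding adj_transp_def by (auto intro!: exI[of _ 0])
  then show ?thesis unfolding 1 2 by (rule adj_ctx)
qed

definition posl :: "nat \<Rightarrow> bool \<Rightarrow> nat list" where
  "posl k b = (if b then rev [0..<k] else [0..<k])"

fun gsw :: "nat \<Rightarrow> bool \<Rightarrow> nat \<Rightarrow> nat list list \<Rightarrow> nat list list" where
  "gsw e b x [] = []"
| "gsw e b x (g # G) = map (\<lambda>p. ins p x g) (posl (Suc (length g) - e) b) @ gsw e (\<not> b) x G"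

fun tchain :: "nat \<Rightarrow> bool \<Rightarrow> nat \<Rightarrow> nat list list \<Rightarrow> bool" where
  "tchain e b x (g # h # G) = (adj_transp (ins (if b then 0 else length g - e) x g) (ins (if b then 0 else length g - e) x h) \<and> tchain e (\<not> b) x (h # G))"
| "tchain e b x _ = True"

lemma set_posl[simp]: "set (posl k b) = {0..<k}"
  by (simp add: posl_def)
lemma posl_ne[simp]: "posl k b = [] \<longleftrightarrow> k = 0"
  by (simp add: posl_def)
lemma hd_posl: "0 < k \<Longrightarrow> hd (posl k b) = (if b then k - 1 else 0)"
  by (auto simp: posl_def hd_rev hd_upt)
lemma last_posl: "0 < k \<Longrightarrow> last (posl k b) = (if b then 0 else k - 1)"
  by (auto simp: posl_def last_rev hd_upt)
lemma hd_block: "0 < k \<Longrightarrow> hd (map f (posl k b)) = f (if b then k - 1 else 0)"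
  by (simp add: hd_map hd_posl)
lemma last_block: "0 < k \<Longrightarrow> last (map f (posl k b)) = f (if b then 0 else k - 1)"
  by (simp add: last_map last_posl)

lemma length_gsw: "(\<forall>g\<in>set G. length g = l) \<Longrightarrow> length (gsw e b x G) = length G * (Suc l - e)"
  by (induction G arbitrary: b) (auto simp: posl_def)

lemma words_gsw: "w \<in> set (gsw e b x G) \<Longrightarrow> \<exists>g\<in>set G. \<exists>p\<le>length g. w = ins p x g"
proof (induction G arbitrary: b)
  case (Cons g G)
  show ?case
  proof (cases "w \<in> set (gsw e (\<not> b) x G)")
    case True then show ?thesis using Cons.IH by fastforce
  next
    case False
    then obtain p where "p < Suc (length g) - e" "w = ins p x g" using Cons.prems by auto
    then have "p \<le> length g" "w = ins p x g" by auto
    then have "\<exists>p\<le>length g. w = ins p x g" by blast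
    then show ?thesis by simp
  qed
qed simp

lemma length_words_gsw: "(\<forall>g\<in>set G. length g = l) \<Longrightarrow> \<forall>w\<in>set (gsw e b x G). length w = Suc l"
  using words_gsw by fastforce

lemma gsw_append: "gsw e b x (G @ H) = gsw e b x G @ gsw e (if even (length G) then b else \<not> b) x H"
  by (induction G arbitrary: b) auto

lemma distinct_gsw: "distinct G \<Longrightarrow> (\<forall>g\<in>set G. x \<notin> set g) \<Longrightarrow> distinct (gsw e b x G)"
proof (induction G arbitrary: b)
  case Nil then show ?case by simp
next
  case (Cons g G)
  have d1: "distinct (map (\<lambda>p. ins p x g) (posl (Suc (length g) - e) b))"
  proof -
    have "inj_on (\<lambda>p. ins p x g) (set (posl (Suc (length g) - e) b))"
    proof (rule inj_onI)
      fix p q assume "p \<in> set (posl (Suc (length g) - e) b)" "q \<in> set (posl (Suc (length g) - e) b)"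
        "ins p x g = ins q x g"
      then show "p = q" using ins_inj[of x g g p q] Cons.prems by auto
    qed
    then show ?thesis by (simp add: distinct_map posl_def)
  qed
  have disj: "set (map (\<lambda>p. ins p x g) (posl (Suc (length g) - e) b)) \<inter> set (gsw e (\<not> b) x G) = {}"
  proof (rule ccontr)
    assume "\<not> ?thesis"
    then obtain p w where w: "w = ins p x g" "w \<in> set (gsw e (\<not> b) x G)" by auto
    then obtain h q where h: "h \<in> set G" "w = ins q x h" using words_gsw by blast
    then have "g = h" using w Cons.prems removeAll_ins by (metis list.set_intros)
    then show False using h Cons.prems by simp
  qed
  show ?case using d1 disj Cons by auto
qed

lemma succ_block: "k \<le> Suc (length g) \<Longrightarrow> successively adj_transp (map (\<lambda>p. ins p x g) (posl k b))"
proof -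
  assume k: "k \<le> Suc (length g)"
  have s: "successively adj_transp (map (\<lambda>p. ins p x g) [0..<k])"
    unfolding successively_conv_nth using k by (auto intro!: adj_ins_step)
  show ?thesis
  proof (cases b)
    case True
    have "successively (\<lambda>u v. adj_transp v u) (map (\<lambda>p. ins p x g) [0..<k])"
      using s by (rule successively_mono) (auto intro: adj_sym)
    then show ?thesis using True by (simp add: posl_def rev_map[symmetric])
  qed (use s in \<open>simp add: posl_def\<close>)
qed

lemma succ_gsw: "e \<le> 1 \<Longrightarrow> (\<forall>g\<in>set G. e \<le> length g) \<Longrightarrow> tchain e b x G \<Longrightarrow> successively adj_transp (gsw e b x G)"
proof (induction G arbitrary: b)
  case Nil then show ?case by simp
next
  case (Cons g G)
  have blk: "successively adj_transp (map (\<lambda>p. ins p x g) (posl (Suc (length g) - e) b))"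
    by (rule succ_block) simp
  show ?case
  proof (cases G)
    case Nil then show ?thesis using blk by simp
  next
    case (Cons h G')
    have tc: "tchain e (\<not> b) x G" "adj_transp (ins (if b then 0 else length g - e) x g) (ins (if b then 0 else length g - e) x h)"
      using Cons.prems(3) \<open>G = h # G'\<close> by auto
    have IH: "successively adj_transp (gsw e (\<not> b) x G)" using Cons.IH[OF Cons.prems(1) _ tc(1)] Cons.prems(2) by simp
    have lh: "length h = length g" using adj_length[OF tc(2)] by simp
    have k: "0 < Suc (length g) - e" "0 < Suc (length h) - e" using Cons.prems(1,2) lh by auto
    have "last (map (\<lambda>p. ins p x g) (posl (Suc (length g) - e) b)) = ins (if b then 0 else length g - e) x g"
      using k by (simp add: last_block)
    moreover have "hd (gsw e (\<not> b) x G) = ins (if b then 0 else length g - e) x h"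
      using k lh \<open>G = h # G'\<close> by (simp add: hd_block)
    ultimately show ?thesis using blk IH tc(2) k \<open>G = h # G'\<close>
      by (simp add: successively_append_iff posl_def)
  qed
qed

lemma tchain0: "successively adj_transp G \<Longrightarrow> tchain 0 b x G"
proof (induction G arbitrary: b rule: induct_list012)
  case (3 g h G)
  have a: "adj_transp g h" using "3.prems" by (simp add: successively_Cons)
  have "adj_transp (ins (if b then 0 else length g) x g) (ins (if b then 0 else length g) x h)"
    using adj_Cons[OF a] adj_snoc[OF a] adj_length[OF a] by (auto simp: ins_end)
  then show ?case using "3.IH"(2) "3.prems" by (auto simp: successively_Cons)
qed auto

lemma hd_gsw: "G \<noteq> [] \<Longrightarrow> e \<le> length (hd G) \<Longrightarrow> hd (gsw e b x G) = ins (if b then length (hd G) - e else 0) x (hd G)"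
  by (cases G) (auto simp: hd_block)

lemma last_gsw: "G \<noteq> [] \<Longrightarrow> (\<forall>g\<in>set G. e \<le> length g) \<Longrightarrow>
   last (gsw e b x G) = ins (if b = odd (length G) then 0 else length (last G) - e) x (last G)"
proof (induction G arbitrary: b)
  case (Cons g G)
  show ?case
  proof (cases G)
    case Nil then show ?thesis using Cons.prems by (auto simp: last_block)
  next
    case (Cons h G')
    then have "gsw e (\<not> b) x G \<noteq> []" using Cons.prems by (simp add: posl_def)
    then show ?thesis using Cons.IH[of "\<not> b"] Cons.prems \<open>G = h # G'\<close> by auto
  qed
qed simp

lemma words_gsw_e: "w \<in> set (gsw e b x G) \<Longrightarrow> \<exists>g\<in>set G. \<exists>p. p + e \<le> length g \<and> w = ins p x g"
proof (induction G arbitrary: b)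
  case (Cons g G)
  show ?case
  proof (cases "w \<in> set (gsw e (\<not> b) x G)")
    case True then show ?thesis using Cons.IH by fastforce
  next
    case False
    then obtain p where "p < Suc (length g) - e" "w = ins p x g" using Cons.prems by auto
    then have "p + e \<le> length g" "w = ins p x g" by auto
    then have "\<exists>p. p + e \<le> length g \<and> w = ins p x g" by blast
    then show ?thesis by simp
  qed
qed simp

lemma last_ins: "p < length g \<Longrightarrow> last (ins p y g) = last g"
  by (simp add: ins_def)

definition nest :: "nat \<Rightarrow> nat \<Rightarrow> nat \<Rightarrow> bool \<Rightarrow> bool \<Rightarrow> bool \<Rightarrow> nat list \<Rightarrow> nat list list" where
  "nest x y z b1 b2 b3 \<sigma> = gsw 0 b3 z (gsw 0 b2 y (gsw 0 b1 x [\<sigma>]))"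

definition twc :: "nat \<Rightarrow> nat \<Rightarrow> nat list \<Rightarrow> nat list list" where
  "twc x y \<sigma> = map (\<lambda>g. g @ [y]) (gsw 0 True x [\<sigma>]) @ gsw 1 True y (map (\<lambda>r. ins r x \<sigma>) [0..<Suc (length \<sigma>)])"

definition tw :: "nat \<Rightarrow> nat \<Rightarrow> nat \<Rightarrow> bool \<Rightarrow> nat list \<Rightarrow> nat list list" where
  "tw x y z b \<sigma> = gsw 0 b z (twc x y \<sigma>)"

definition wform :: "nat \<Rightarrow> nat \<Rightarrow> nat \<Rightarrow> nat list \<Rightarrow> nat list \<Rightarrow> bool" where
  "wform x y z \<sigma> w \<longleftrightarrow> (\<exists>p1 p2 p3. w = ins p3 z (ins p2 y (ins p1 x \<sigma>)))"

lemma words_nest: "w \<in> set (nest x y z b1 b2 b3 \<sigma>) \<Longrightarrow> wform x y z \<sigma> w"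
proof -
  assume "w \<in> set (nest x y z b1 b2 b3 \<sigma>)"
  then obtain g2 p3 where g2: "g2 \<in> set (gsw 0 b2 y (gsw 0 b1 x [\<sigma>]))" "w = ins p3 z g2"
    unfolding nest_def by (blast dest: words_gsw)
  then obtain g1 p2 where g1: "g1 \<in> set (gsw 0 b1 x [\<sigma>])" "g2 = ins p2 y g1" by (blast dest: words_gsw)
  then obtain p1 where "g1 = ins p1 x \<sigma>" by (auto dest: words_gsw)
  then show ?thesis unfolding wform_def using g1 g2 by blast
qed

lemma words_twc: "w \<in> set (twc x y \<sigma>) \<Longrightarrow> \<exists>p1 p2. w = ins p2 y (ins p1 x \<sigma>)"
proof -
  assume "w \<in> set (twc x y \<sigma>)"
  then consider (a) "w \<in> set (map (\<lambda>g. g @ [y]) (gsw 0 True x [\<sigma>]))"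
    | (b) "w \<in> set (gsw 1 True y (map (\<lambda>r. ins r x \<sigma>) [0..<Suc (length \<sigma>)]))"
    unfolding twc_def by auto
  then show ?thesis
  proof cases
    case a
    then obtain g where g: "g \<in> set (gsw 0 True x [\<sigma>])" "w = g @ [y]" by auto
    then obtain p where "g = ins p x \<sigma>" by (auto dest: words_gsw)
    then have "w = ins (Suc (length \<sigma>)) y (ins p x \<sigma>)" using g by (simp add: ins_end)
    then show ?thesis by blast
  next
    case b
    then obtain g p where g: "g \<in> set (map (\<lambda>r. ins r x \<sigma>) [0..<Suc (length \<sigma>)])" "w = ins p y g"
      by (blast dest: words_gsw)
    then obtain r where "g = ins r x \<sigma>" by auto
    then show ?thesis using g by blast
  qed
qed

lemma words_tw: "w \<in> set (tw x y z b \<sigma>) \<Longrightarrow> wform x y z \<sigma> w"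
proof -
  assume "w \<in> set (tw x y z b \<sigma>)"
  then obtain g p3 where g: "g \<in> set (twc x y \<sigma>)" "w = ins p3 z g"
    unfolding tw_def by (blast dest: words_gsw)
  then obtain p1 p2 where "g = ins p2 y (ins p1 x \<sigma>)" by (blast dest: words_twc)
  then show ?thesis unfolding wform_def using g by blast
qed

lemma len_nest: "length (nest x y z b1 b2 b3 \<sigma>) = Suc (length \<sigma>) * Suc (Suc (length \<sigma>)) * Suc (Suc (Suc (length \<sigma>)))"
proof -
  have 1: "length (gsw 0 b1 x [\<sigma>]) = Suc (length \<sigma>)" by (simp add: posl_def)
  have l1x: "\<forall>w\<in>set (gsw 0 b1 x [\<sigma>]). length w = Suc (length \<sigma>)" using length_words_gsw[of "[\<sigma>]" "length \<sigma>"] by simp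
  have 2: "length (gsw 0 b2 y (gsw 0 b1 x [\<sigma>])) = Suc (length \<sigma>) * Suc (Suc (length \<sigma>))"
    using length_gsw[OF l1x] 1 by simp
  have l2x: "\<forall>w\<in>set (gsw 0 b2 y (gsw 0 b1 x [\<sigma>])). length w = Suc (Suc (length \<sigma>))"
    by (rule length_words_gsw[OF l1x])
  show ?thesis unfolding nest_def using length_gsw[OF l2x] 2 by simp
qed

lemma len_twc: "length (twc x y \<sigma>) = Suc (length \<sigma>) * Suc (Suc (length \<sigma>))"
proof -
  have 1: "length (gsw 0 True x [\<sigma>]) = Suc (length \<sigma>)" by (simp add: posl_def)
  have 2: "length (gsw 1 True y (map (\<lambda>r. ins r x \<sigma>) [0..<Suc (length \<sigma>)])) = Suc (length \<sigma>) * Suc (length \<sigma>)"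
    by (subst length_gsw[where l = "Suc (length \<sigma>)"]) auto
  show ?thesis unfolding twc_def using 1 2 by simp
qed

lemma len_words_twc: "\<forall>w\<in>set (twc x y \<sigma>). length w = Suc (Suc (length \<sigma>))"
proof
  fix w assume "w \<in> set (twc x y \<sigma>)"
  then obtain p1 p2 where "w = ins p2 y (ins p1 x \<sigma>)" by (blast dest: words_twc)
  then show "length w = Suc (Suc (length \<sigma>))" by simp
qed

lemma len_tw: "length (tw x y z b \<sigma>) = Suc (length \<sigma>) * Suc (Suc (length \<sigma>)) * Suc (Suc (Suc (length \<sigma>)))"
  unfolding tw_def using length_gsw[OF len_words_twc] len_twc by simp

locale fresh3 =
  fixes x y z :: nat and \<sigma> :: "nat list"
  assumes d\<sigma>: "distinct \<sigma>" and xs: "x \<notin> set \<sigma>" and ys: "y \<notin> set \<sigma>" and zs: "z \<notin> set \<sigma>"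
    and xy: "x \<noteq> y" and xz: "x \<noteq> z" and yz: "y \<noteq> z"
begin

lemma wform_props: "wform x y z \<sigma> w \<Longrightarrow> distinct w \<and> set w = set \<sigma> \<union> {x, y, z} \<and> length w = length \<sigma> + 3"
  unfolding wform_def using d\<sigma> xs ys zs xy xz yz by auto

lemma wform_filter: "wform x y z \<sigma> w \<Longrightarrow> \<not> P x \<Longrightarrow> \<not> P y \<Longrightarrow> \<not> P z \<Longrightarrow> filter P w = filter P \<sigma>"
  unfolding wform_def by auto

lemma G1_props: "distinct (gsw 0 b1 x [\<sigma>])" "\<forall>g\<in>set (gsw 0 b1 x [\<sigma>]). y \<notin> set g \<and> z \<notin> set g"
proof -
  show "distinct (gsw 0 b1 x [\<sigma>])" by (rule distinct_gsw) (use xs in auto)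
  show "\<forall>g\<in>set (gsw 0 b1 x [\<sigma>]). y \<notin> set g \<and> z \<notin> set g"
  proof
    fix g assume "g \<in> set (gsw 0 b1 x [\<sigma>])"
    then obtain g0 p where "g0 \<in> set [\<sigma>]" "g = ins p x g0" by (blast dest: words_gsw)
    then show "y \<notin> set g \<and> z \<notin> set g" using ys zs xy xz by auto
  qed
qed

lemma G2_props: "distinct (gsw 0 b2 y (gsw 0 b1 x [\<sigma>]))" "\<forall>g\<in>set (gsw 0 b2 y (gsw 0 b1 x [\<sigma>])). z \<notin> set g"
proof -
  show "distinct (gsw 0 b2 y (gsw 0 b1 x [\<sigma>]))"
    by (rule distinct_gsw[OF G1_props(1)]) (use G1_props(2) in blast)
  show "\<forall>g\<in>set (gsw 0 b2 y (gsw 0 b1 x [\<sigma>])). z \<notin> set g"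
  proof
    fix g assume "g \<in> set (gsw 0 b2 y (gsw 0 b1 x [\<sigma>]))"
    then obtain g1 p where g1: "g1 \<in> set (gsw 0 b1 x [\<sigma>])" "g = ins p y g1" by (blast dest: words_gsw)
    have "z \<notin> set g1" using G1_props(2) g1(1) by blast
    then show "z \<notin> set g" using g1(2) yz by simp
  qed
qed

lemma distinct_nest: "distinct (nest x y z b1 b2 b3 \<sigma>)"
  unfolding nest_def by (rule distinct_gsw[OF G2_props(1)]) (use G2_props(2) in blast)

lemma succ_nest: "successively adj_transp (nest x y z b1 b2 b3 \<sigma>)"
proof -
  have 1: "successively adj_transp (gsw 0 b1 x [\<sigma>])" by (rule succ_gsw) (simp_all add: tchain0)
  have 2: "successively adj_transp (gsw 0 b2 y (gsw 0 b1 x [\<sigma>]))"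
    by (rule succ_gsw) (simp_all add: tchain0 1 del: gsw.simps)
  show ?thesis unfolding nest_def by (rule succ_gsw) (simp_all add: tchain0 2 del: gsw.simps)
qed

lemma distinct_twc: "distinct (twc x y \<sigma>)"
proof -
  have p1: "distinct (map (\<lambda>g. g @ [y]) (gsw 0 True x [\<sigma>]))"
    using G1_props(1)[of True] by (simp add: distinct_map inj_on_def)
  have dG: "distinct (map (\<lambda>r. ins r x \<sigma>) [0..<Suc (length \<sigma>)])"
  proof -
    have "inj_on (\<lambda>r. ins r x \<sigma>) (set [0..<Suc (length \<sigma>)])"
    proof (rule inj_onI)
      fix p q assume "p \<in> set [0..<Suc (length \<sigma>)]" "q \<in> set [0..<Suc (length \<sigma>)]" "ins p x \<sigma> = ins q x \<sigma>"
      then show "p = q" using ins_inj[of x \<sigma> \<sigma> p q] xs by auto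
    qed
    then show ?thesis by (simp add: distinct_map)
  qed
  have p2: "distinct (gsw 1 True y (map (\<lambda>r. ins r x \<sigma>) [0..<Suc (length \<sigma>)]))"
    using dG ys xy by (intro distinct_gsw) auto
  have disj: "set (map (\<lambda>g. g @ [y]) (gsw 0 True x [\<sigma>])) \<inter> set (gsw 1 True y (map (\<lambda>r. ins r x \<sigma>) [0..<Suc (length \<sigma>)])) = {}"
  proof (rule ccontr)
    assume "\<not> ?thesis"
    then obtain w where w1: "w \<in> set (map (\<lambda>g. g @ [y]) (gsw 0 True x [\<sigma>]))"
      and w2: "w \<in> set (gsw 1 True y (map (\<lambda>r. ins r x \<sigma>) [0..<Suc (length \<sigma>)]))" by blast
    from w1 have "last w = y" by auto
    from words_gsw_e[OF w2] obtain g p where g: "g \<in> set (map (\<lambda>r. ins r x \<sigma>) [0..<Suc (length \<sigma>)])"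
      "p + 1 \<le> length g" "w = ins p y g" by blast
    then have "last w = last g" by (simp add: last_ins)
    moreover have "g \<noteq> []" "y \<notin> set g" using g ys xy by auto
    ultimately show False using \<open>last w = y\<close> by (metis last_in_set)
  qed
  show ?thesis unfolding twc_def using p1 p2 disj by simp
qed

lemma distinct_tw: "distinct (tw x y z b \<sigma>)"
  unfolding tw_def
proof (rule distinct_gsw[OF distinct_twc])
  show "\<forall>g\<in>set (twc x y \<sigma>). z \<notin> set g"
  proof
    fix g assume "g \<in> set (twc x y \<sigma>)"
    then obtain p1 p2 where "g = ins p2 y (ins p1 x \<sigma>)" by (blast dest: words_twc)
    then show "z \<notin> set g" using zs xz yz by auto
  qed
qed

end

lemma tchain_tw:
  assumes "odd (length \<sigma>)" "i \<le> length \<sigma>"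
  shows "tchain 1 (even i) y (map (\<lambda>r. ins r x \<sigma>) [i..<Suc (length \<sigma>)])"
  using assms(2)
proof (induction "length \<sigma> - i" arbitrary: i)
  case 0
  then have "i = length \<sigma>" by simp
  then show ?case by simp
next
  case (Suc k)
  define m where "m = length \<sigma>"
  have im: "i < m" using Suc m_def by simp
  have IH: "tchain 1 (even (Suc i)) y (map (\<lambda>r. ins r x \<sigma>) [Suc i..<Suc m])"
    using Suc.hyps(1)[of "Suc i"] Suc.hyps(2) im unfolding m_def by simp
  have u2: "[Suc i..<Suc m] = Suc i # [Suc (Suc i)..<Suc m]" by (rule upt_conv_Cons) (use im in simp)
  have u1: "[i..<Suc m] = i # [Suc i..<Suc m]" by (rule upt_conv_Cons) (use im in simp)
  have eq2: "map (\<lambda>r. ins r x \<sigma>) [Suc i..<Suc m] = ins (Suc i) x \<sigma> # map (\<lambda>r. ins r x \<sigma>) [Suc (Suc i)..<Suc m]"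
    unfolding u2 by simp
  have eq1: "map (\<lambda>r. ins r x \<sigma>) [i..<Suc m] = ins i x \<sigma> # map (\<lambda>r. ins r x \<sigma>) [Suc i..<Suc m]"
    unfolding u1 by simp
  have eq: "map (\<lambda>r. ins r x \<sigma>) [i..<Suc m] = ins i x \<sigma> # ins (Suc i) x \<sigma> # map (\<lambda>r. ins r x \<sigma>) [Suc (Suc i)..<Suc m]"
    unfolding eq1 eq2 ..
  have adj: "adj_transp (ins (if even i then 0 else length (ins i x \<sigma>) - 1) y (ins i x \<sigma>))
                        (ins (if even i then 0 else length (ins i x \<sigma>) - 1) y (ins (Suc i) x \<sigma>))"
  proof (cases "even i")
    case True
    then show ?thesis using adj_Cons[OF adj_ins_step[of i \<sigma> x]] im m_def by simp
  next
    case False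
    then have "Suc i \<noteq> m" using assms(1) m_def by (metis even_Suc)
    then have si: "Suc i \<le> m - 1" using im by linarith
    have m1: "Suc (m - 1) = m" using im by simp
    have c1: "ins m y (ins i x \<sigma>) = ins i x (ins (m - 1) y \<sigma>)"
      using ins_comm[of i "m - 1" \<sigma> y x] si m1 m_def by simp
    have c2: "ins m y (ins (Suc i) x \<sigma>) = ins (Suc i) x (ins (m - 1) y \<sigma>)"
      using ins_comm[of "Suc i" "m - 1" \<sigma> y x] si m1 m_def by simp
    have "adj_transp (ins i x (ins (m - 1) y \<sigma>)) (ins (Suc i) x (ins (m - 1) y \<sigma>))"
      by (rule adj_ins_step) (use im m_def in simp)
    then show ?thesis using False c1 c2 m_def by simp
  qed
  have IH': "tchain 1 (\<not> even i) y (ins (Suc i) x \<sigma> # map (\<lambda>r. ins r x \<sigma>) [Suc (Suc i)..<Suc m])"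
    using IH[unfolded eq2] by simp
  show ?case unfolding m_def[symmetric] eq tchain.simps(1) using adj IH' by blast
qed

lemma succ_G1: "successively adj_transp (gsw 0 b x [\<sigma>])"
  by (rule succ_gsw) (simp_all add: tchain0)

lemma G1_ne: "gsw 0 b x [\<sigma>] \<noteq> []" by (simp add: posl_def)
lemma len_G1: "length (gsw 0 b x [\<sigma>]) = Suc (length \<sigma>)" by (simp add: posl_def)
lemma lenw_G1: "\<forall>g\<in>set (gsw 0 b x [\<sigma>]). length g = Suc (length \<sigma>)"
  using length_words_gsw[of "[\<sigma>]" "length \<sigma>"] by simp
lemma hd_G1: "hd (gsw 0 b x [\<sigma>]) = ins (if b then length \<sigma> else 0) x \<sigma>"
  using hd_gsw[of "[\<sigma>]" 0 b x] by simp
lemma last_G1: "last (gsw 0 b x [\<sigma>]) = ins (if b then 0 else length \<sigma>) x \<sigma>"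
  using last_gsw[of "[\<sigma>]" 0 b x] by simp

lemma succ_twc: assumes "odd (length \<sigma>)" shows "successively adj_transp (twc x y \<sigma>)"
proof -
  define G1 where "G1 = gsw 0 True x [\<sigma>]"
  define Gr where "Gr = map (\<lambda>r. ins r x \<sigma>) [0..<Suc (length \<sigma>)]"
  have s1: "successively adj_transp (map (\<lambda>g. g @ [y]) G1)"
    unfolding successively_map G1_def using succ_G1 by (rule successively_mono) (rule adj_snoc)
  have tc: "tchain 1 True y Gr" using tchain_tw[OF assms, of 0 y x] unfolding Gr_def by simp
  have s2: "successively adj_transp (gsw 1 True y Gr)"
    by (rule succ_gsw[OF _ _ tc]) (auto simp: Gr_def)
  have Gr_ne: "Gr \<noteq> []" "hd Gr = x # \<sigma>" by (simp_all add: Gr_def upt_conv_Cons del: upt_Suc)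
  have l1: "last (map (\<lambda>g. g @ [y]) G1) = x # \<sigma> @ [y]"
    using last_G1[of True x \<sigma>] G1_ne unfolding G1_def by (simp add: last_map)
  have h2: "hd (gsw 1 True y Gr) = ins (length \<sigma>) y (x # \<sigma>)"
    using hd_gsw[of Gr 1 True y] Gr_ne by simp
  have a: "adj_transp (x # \<sigma> @ [y]) (ins (length \<sigma>) y (x # \<sigma>))"
  proof -
    have "adj_transp (ins (length \<sigma>) y (x # \<sigma>)) (ins (Suc (length \<sigma>)) y (x # \<sigma>))"
      by (rule adj_ins_step) simp
    then show ?thesis by (simp add: ins_end adj_sym)
  qed
  have ne2: "gsw 1 True y Gr \<noteq> []" using Gr_ne by (cases Gr) (auto simp: posl_def)
  show ?thesis unfolding twc_def G1_def[symmetric] Gr_def[symmetric]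
    using s1 s2 a l1 h2 ne2 by (auto simp: successively_append_iff)
qed

lemma succ_tw: "odd (length \<sigma>) \<Longrightarrow> successively adj_transp (tw x y z b \<sigma>)"
  unfolding tw_def by (rule succ_gsw) (simp_all add: tchain0 succ_twc)

lemma hd_nest: "hd (nest x y z b1 b2 b3 \<sigma>) =
  ins (if b3 then Suc (Suc (length \<sigma>)) else 0) z (ins (if b2 then Suc (length \<sigma>) else 0) y (ins (if b1 then length \<sigma> else 0) x \<sigma>))"
proof -
  define G1 where "G1 = gsw 0 b1 x [\<sigma>]"
  define G2 where "G2 = gsw 0 b2 y G1"
  have n1: "G1 \<noteq> []" unfolding G1_def by (rule G1_ne)
  have h1: "hd G1 = ins (if b1 then length \<sigma> else 0) x \<sigma>" unfolding G1_def by (rule hd_G1)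
  have h2: "hd G2 = ins (if b2 then Suc (length \<sigma>) else 0) y (hd G1)"
    unfolding G2_def using hd_gsw[OF n1, of 0 b2 y] h1 by simp
  have n2: "G2 \<noteq> []" unfolding G2_def using n1 by (cases G1) (auto simp: posl_def)
  have "hd (gsw 0 b3 z G2) = ins (if b3 then Suc (Suc (length \<sigma>)) else 0) z (hd G2)"
    using hd_gsw[OF n2, of 0 b3 z] h2 h1 by simp
  then show ?thesis unfolding nest_def G1_def[symmetric] G2_def[symmetric] h2 h1 .
qed

lemma last_nest: assumes "odd (length \<sigma>)" shows "last (nest x y z b1 b2 b3 \<sigma>) =
  ins (if b3 then Suc (Suc (length \<sigma>)) else 0) z (ins (if b2 then Suc (length \<sigma>) else 0) y (ins (if b1 then 0 else length \<sigma>) x \<sigma>))"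
proof -
  define G1 where "G1 = gsw 0 b1 x [\<sigma>]"
  define G2 where "G2 = gsw 0 b2 y G1"
  have n1: "G1 \<noteq> []" unfolding G1_def by (rule G1_ne)
  have h1: "last G1 = ins (if b1 then 0 else length \<sigma>) x \<sigma>" unfolding G1_def by (rule last_G1)
  have lw1: "\<forall>g\<in>set G1. length g = Suc (length \<sigma>)" unfolding G1_def by (rule lenw_G1)
  have len1: "length G1 = Suc (length \<sigma>)" unfolding G1_def by (rule len_G1)
  have h2: "last G2 = ins (if b2 then Suc (length \<sigma>) else 0) y (last G1)"
    unfolding G2_def using last_gsw[OF n1, of 0 b2 y] h1 len1 assms by simp
  have lw2: "\<forall>g\<in>set G2. length g = Suc (Suc (length \<sigma>))" unfolding G2_def using length_words_gsw[OF lw1] by simp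
  have len2: "length G2 = Suc (length \<sigma>) * Suc (Suc (length \<sigma>))" unfolding G2_def using length_gsw[OF lw1] len1 by simp
  have n2: "G2 \<noteq> []" using len2 by auto
  have "last (gsw 0 b3 z G2) = ins (if b3 then Suc (Suc (length \<sigma>)) else 0) z (last G2)"
    using last_gsw[OF n2, of 0 b3 z] len2 assms lw2 n2 by simp
  then show ?thesis unfolding nest_def G1_def[symmetric] G2_def[symmetric] h2 h1 .
qed

lemma hd_twc: "hd (twc x y \<sigma>) = \<sigma> @ [x, y]"
  unfolding twc_def using G1_ne[of True x \<sigma>] hd_G1[of True x \<sigma>] by (simp add: hd_map ins_end)

lemma last_twc: assumes "odd (length \<sigma>)" shows "last (twc x y \<sigma>) = \<sigma> @ [y, x]"
proof -
  define Gr where "Gr = map (\<lambda>r. ins r x \<sigma>) [0..<Suc (length \<sigma>)]"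
  have ne: "Gr \<noteq> []" by (simp add: Gr_def)
  have lGr: "last Gr = \<sigma> @ [x]" by (simp add: Gr_def ins_end)
  have "last (gsw 1 True y Gr) = ins (length \<sigma>) y (\<sigma> @ [x])"
    using last_gsw[OF ne, of 1 True y] lGr assms by (simp add: Gr_def)
  moreover have "ins (length \<sigma>) y (\<sigma> @ [x]) = \<sigma> @ [y, x]" by (simp add: ins_def)
  moreover have "gsw 1 True y Gr \<noteq> []"
    using length_gsw[of Gr "Suc (length \<sigma>)" 1 True y] by (auto simp: Gr_def)
  ultimately show ?thesis unfolding twc_def Gr_def[symmetric] by simp
qed

lemma hd_tw: "hd (tw x y z b \<sigma>) = ins (if b then Suc (Suc (length \<sigma>)) else 0) z (\<sigma> @ [x, y])"
proof -
  have ne: "twc x y \<sigma> \<noteq> []" using len_twc[of x y \<sigma>] by auto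
  show ?thesis unfolding tw_def using hd_gsw[OF ne, of 0 b z] hd_twc by simp
qed

lemma last_tw: assumes "odd (length \<sigma>)" shows "last (tw x y z b \<sigma>) = ins (if b then Suc (Suc (length \<sigma>)) else 0) z (\<sigma> @ [y, x])"
proof -
  have ne: "twc x y \<sigma> \<noteq> []" using len_twc[of x y \<sigma>] by auto
  show ?thesis unfolding tw_def using last_gsw[OF ne, of 0 b z] last_twc[OF assms] len_twc[of x y \<sigma>] assms by simp
qed

definition BP :: "nat \<Rightarrow> nat list \<Rightarrow> nat list list \<Rightarrow> bool" where
  "BP m \<sigma> Q \<longleftrightarrow> length Q = Suc m * Suc (Suc m) * Suc (Suc (Suc m)) \<and> distinct Q \<and> successively adj_transp Q \<and>
     (\<forall>w\<in>set Q. is_perm_word (m + 3) w \<and> filter (\<lambda>k. k \<le> m) w = \<sigma>)"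

lemma BP_rev: "BP m \<sigma> Q \<Longrightarrow> BP m \<sigma> (rev Q)"
  unfolding BP_def by (auto intro: successively_mono adj_sym)

lemma len_sigma: "distinct \<sigma> \<Longrightarrow> set \<sigma> = {1..m} \<Longrightarrow> length \<sigma> = m"
  by (metis card_atLeastAtMost diff_Suc_1 distinct_card)

lemma wform_BP:
  assumes "distinct \<sigma>" "set \<sigma> = {1..m}" "{x,y,z} = {Suc m, Suc (Suc m), Suc (Suc (Suc m))}" "distinct [x,y,z]"
    and "wform x y z \<sigma> w"
  shows "is_perm_word (m + 3) w \<and> filter (\<lambda>k. k \<le> m) w = \<sigma>"
proof -
  have xm: "x \<in> {Suc m, Suc (Suc m), Suc (Suc (Suc m))}" "y \<in> {Suc m, Suc (Suc m), Suc (Suc (Suc m))}"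
    "z \<in> {Suc m, Suc (Suc m), Suc (Suc (Suc m))}" using assms(3) by blast+
  then have gt: "m < x" "m < y" "m < z" by auto
  interpret fresh3 x y z \<sigma>
  proof
    show "x \<notin> set \<sigma>" "y \<notin> set \<sigma>" "z \<notin> set \<sigma>" using gt assms(2) by auto
  qed (use assms in auto)
  have "distinct w" "set w = set \<sigma> \<union> {x, y, z}" using wform_props[OF assms(5)] by auto
  moreover have "set \<sigma> \<union> {x, y, z} = {1..m+3}"
  proof -
    have "{1..m+3} = {1..m} \<union> {Suc m, Suc (Suc m), Suc (Suc (Suc m))}" by auto
    then show ?thesis using assms(2,3) by simp
  qed
  moreover have "filter (\<lambda>k. k \<le> m) w = filter (\<lambda>k. k \<le> m) \<sigma>"
    by (rule wform_filter[OF assms(5)]) (use gt in auto)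
  moreover have "filter (\<lambda>k. k \<le> m) \<sigma> = \<sigma>" using assms(2) by (auto simp: filter_id_conv)
  ultimately show ?thesis unfolding is_perm_word_def by simp
qed

lemma BP_nest:
  assumes "distinct \<sigma>" "set \<sigma> = {1..m}" "odd m" "{x,y,z} = {Suc m, Suc (Suc m), Suc (Suc (Suc m))}" "distinct [x,y,z]"
  shows "BP m \<sigma> (nest x y z b1 b2 b3 \<sigma>)"
proof -
  have lm: "length \<sigma> = m" using len_sigma assms by blast
  have xm: "x \<in> {Suc m, Suc (Suc m), Suc (Suc (Suc m))}" "y \<in> {Suc m, Suc (Suc m), Suc (Suc (Suc m))}"
    "z \<in> {Suc m, Suc (Suc m), Suc (Suc (Suc m))}" using assms(4) by blast+
  then have gt: "m < x" "m < y" "m < z" by auto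
  interpret fresh3 x y z \<sigma>
  proof
    show "x \<notin> set \<sigma>" "y \<notin> set \<sigma>" "z \<notin> set \<sigma>" using gt assms(2) by auto
  qed (use assms in auto)
  show ?thesis unfolding BP_def
    using len_nest[of x y z b1 b2 b3 \<sigma>] lm distinct_nest succ_nest
      wform_BP[OF assms(1,2,4,5) words_nest] by auto
qed

lemma BP_tw:
  assumes "distinct \<sigma>" "set \<sigma> = {1..m}" "odd m" "{x,y,z} = {Suc m, Suc (Suc m), Suc (Suc (Suc m))}" "distinct [x,y,z]"
  shows "BP m \<sigma> (tw x y z b \<sigma>)"
proof -
  have lm: "length \<sigma> = m" using len_sigma assms by blast
  have xm: "x \<in> {Suc m, Suc (Suc m), Suc (Suc (Suc m))}" "y \<in> {Suc m, Suc (Suc m), Suc (Suc (Suc m))}"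
    "z \<in> {Suc m, Suc (Suc m), Suc (Suc (Suc m))}" using assms(4) by blast+
  then have gt: "m < x" "m < y" "m < z" by auto
  interpret fresh3 x y z \<sigma>
  proof
    show "x \<notin> set \<sigma>" "y \<notin> set \<sigma>" "z \<notin> set \<sigma>" using gt assms(2) by auto
  qed (use assms in auto)
  show ?thesis unfolding BP_def
    using len_tw[of x y z b \<sigma>] lm distinct_tw succ_tw[of \<sigma> x y z b] assms(3)
      wform_BP[OF assms(1,2,4,5) words_tw] by auto
qed

definition blk :: "nat \<Rightarrow> nat \<Rightarrow> nat list \<Rightarrow> nat list list" where
  "blk m j \<sigma> = (let a = Suc m; b = Suc (Suc m); c = Suc (Suc (Suc m)) in
     if j = 0 then nest a b c True True True \<sigma>
     else if j = 1 then tw b c a False \<sigma>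
     else if j = 2 then rev (nest a c b True True True \<sigma>)
     else if j = 3 then tw a c b True \<sigma>
     else if j = 4 then nest c a b True True True \<sigma>
     else if j = 5 then tw a b c False \<sigma>
     else if j = 6 then nest b a c True True False \<sigma>
     else if odd j then nest a b c True False False \<sigma>
     else rev (nest a b c True False False \<sigma>))"

lemma BP_blk:
  assumes "distinct \<sigma>" "set \<sigma> = {1..m}" "odd m"
  shows "BP m \<sigma> (blk m j \<sigma>)"
proof -
  have s1: "{Suc m, Suc (Suc m), Suc (Suc (Suc m))} = {Suc m, Suc (Suc (Suc m)), Suc (Suc m)}" by auto
  have s2: "{Suc (Suc (Suc m)), Suc m, Suc (Suc m)} = {Suc m, Suc (Suc m), Suc (Suc (Suc m))}" by auto
  have s3: "{Suc (Suc m), Suc (Suc (Suc m)), Suc m} = {Suc m, Suc (Suc m), Suc (Suc (Suc m))}" by auto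
  have s4: "{Suc (Suc m), Suc m, Suc (Suc (Suc m))} = {Suc m, Suc (Suc m), Suc (Suc (Suc m))}" by auto
  note N = BP_nest[OF assms] and T = BP_tw[OF assms]
  show ?thesis unfolding blk_def Let_def
    using N[OF refl] N[OF s1[symmetric]] N[OF s2] N[OF s4] T[OF s3] T[OF s1[symmetric]] T[OF refl]
    by (auto intro!: BP_rev)
qed

definition Ends :: "nat \<Rightarrow> nat \<Rightarrow> nat list \<times> nat list" where
  "Ends m j = (let a = Suc m; b = Suc (Suc m); c = Suc (Suc (Suc m)) in
     if j = 0 then ([a], [b, c])
     else if j = 1 then ([a], [c, b])
     else if j = 2 then ([], [a, c, b])
     else if j = 3 then ([], [c, a, b])
     else if j = 4 then ([c], [a, b])
     else if j = 5 then ([c], [b, a])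
     else if j = 6 then ([c, b], [a])
     else if odd j then ([c, b, a], [])
     else ([c, b], [a]))"

lemma last_blk: assumes "length \<sigma> = m" "odd m"
  shows "last (blk m j \<sigma>) = fst (Ends m j) @ \<sigma> @ snd (Ends m j)"
proof -
  have o: "odd (length \<sigma>)" using assms by simp
  show ?thesis unfolding blk_def Ends_def Let_def
    using assms by (simp add: last_nest[OF o] hd_nest last_tw[OF o] last_rev ins_end)
qed

lemma hd_blk: assumes "length \<sigma> = m" "odd m"
  shows "hd (blk m (Suc j) \<sigma>) = fst (Ends m j) @ \<sigma> @ snd (Ends m j)"
proof -
  have o: "odd (length \<sigma>)" using assms by simp
  show ?thesis unfolding blk_def Ends_def Let_def
    using assms by (simp add: last_nest[OF o] hd_nest hd_tw hd_rev ins_end)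
qed

lemma hd_blk0: assumes "length \<sigma> = m" shows "hd (blk m 0 \<sigma>) = \<sigma> @ [Suc m, Suc (Suc m), Suc (Suc (Suc m))]"
  unfolding blk_def Let_def using assms by (simp add: hd_nest ins_end)

lemma trans_blk: assumes "length \<sigma> = m" "odd m" "adj_transp \<sigma> \<sigma>'"
  shows "adj_transp (last (blk m j \<sigma>)) (hd (blk m (Suc j) \<sigma>'))"
proof -
  have "length \<sigma>' = m" using adj_length[OF assms(3)] assms(1) by simp
  then show ?thesis using last_blk[OF assms(1,2)] hd_blk[of \<sigma>' m j] assms adj_ctx by simp
qed

lemma concat_upt_Suc: "concat (map bl [0..<Suc N]) = concat (map bl [0..<N]) @ bl N" by simp

lemma length_concat_blocks: "(\<forall>j<N. length (bl j) = B) \<Longrightarrow> length (concat (map bl [0..<N])) = N * B"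
  by (induction N) auto

lemma succ_concat_blocks:
  "(\<forall>j<N. bl j \<noteq> [] \<and> successively R (bl j)) \<Longrightarrow> (\<forall>j. Suc j < N \<longrightarrow> R (last (bl j)) (hd (bl (Suc j))))
   \<Longrightarrow> successively R (concat (map bl [0..<N]))"
proof (induction N)
  case (Suc N)
  show ?case
  proof (cases N)
    case 0 then show ?thesis using Suc.prems by simp
  next
    case (Suc N')
    have ne: "concat (map bl [0..<N]) \<noteq> []" using Suc.prems \<open>N = Suc N'\<close> by auto
    have l: "last (concat (map bl [0..<N])) = last (bl N')"
      using Suc.prems \<open>N = Suc N'\<close> by (simp del: upt_Suc add: concat_upt_Suc)
    show ?thesis unfolding concat_upt_Suc successively_append_iff
      using Suc.IH Suc.prems ne l \<open>N = Suc N'\<close> by auto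
  qed
qed simp

lemma distinct_concat_blocks:
  "(\<forall>j<N. distinct (bl j)) \<Longrightarrow> (\<forall>i j. i < j \<longrightarrow> j < N \<longrightarrow> set (bl i) \<inter> set (bl j) = {})
   \<Longrightarrow> distinct (concat (map bl [0..<N]))"
proof (induction N)
  case (Suc N)
  have "\<forall>a<N. set (bl a) \<inter> set (bl N) = {}" using Suc.prems(2) by blast
  then have "set (concat (map bl [0..<N])) \<inter> set (bl N) = {}" by auto
  then show ?case using Suc by (simp del: upt_Suc add: concat_upt_Suc)
qed simp

lemma hd_concat_blocks: "0 < N \<Longrightarrow> bl 0 \<noteq> [] \<Longrightarrow> hd (concat (map bl [0..<N])) = hd (bl 0)"
  by (simp add: upt_conv_Cons)

lemma last_concat_blocks: "bl N \<noteq> [] \<Longrightarrow> last (concat (map bl [0..<Suc N])) = last (bl N)"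
  by (simp del: upt_Suc add: concat_upt_Suc)

lemma nth_from_end: "k \<le> l \<Longrightarrow> (pre @ map f (rev [0..<Suc l])) ! (length pre + l - k) = f k"
proof -
  assume "k \<le> l"
  then have e: "length pre + l - k = length pre + (l - k)" by simp
  show ?thesis unfolding e nth_append_length_plus using \<open>k \<le> l\<close> by (simp add: rev_nth del: upt_Suc)
qed

lemma F_tail: assumes "length \<sigma> = m" "odd m"
  shows "\<exists>pre. nest (Suc m) (Suc (Suc m)) (Suc (Suc (Suc m))) True False False \<sigma> =
     pre @ map (\<lambda>p. ins p (Suc (Suc (Suc m))) (Suc (Suc m) # Suc m # \<sigma>)) (rev [0..<Suc (Suc (Suc m))])"
proof -
  define G2 where "G2 = gsw 0 False (Suc (Suc m)) (gsw 0 True (Suc m) [\<sigma>])"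
  have lw1: "\<forall>g\<in>set (gsw 0 True (Suc m) [\<sigma>]). length g = Suc (length \<sigma>)" by (rule lenw_G1)
  have len1: "length (gsw 0 True (Suc m) [\<sigma>]) = Suc (length \<sigma>)" by (rule len_G1)
  have len2: "length G2 = Suc m * Suc (Suc m)" unfolding G2_def using length_gsw[OF lw1] len1 assms by simp
  have ne: "G2 \<noteq> []" using len2 by auto
  have lG2: "last G2 = Suc (Suc m) # Suc m # \<sigma>"
  proof -
    have l1: "last (gsw 0 True (Suc m) [\<sigma>]) = Suc m # \<sigma>" using last_G1[of True "Suc m" \<sigma>] by simp
    show ?thesis
      unfolding G2_def using last_gsw[of "gsw 0 True (Suc m) [\<sigma>]" 0 False "Suc (Suc m)"] G1_ne l1 len1 assms
      by (simp del: gsw.simps)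
  qed
  have split: "G2 = butlast G2 @ [last G2]" using ne by simp
  have ob: "odd (length (butlast G2))" using len2 assms by simp
  have "nest (Suc m) (Suc (Suc m)) (Suc (Suc (Suc m))) True False False \<sigma> = gsw 0 False (Suc (Suc (Suc m))) G2"
    unfolding nest_def G2_def ..
  also have "\<dots> = gsw 0 False (Suc (Suc (Suc m))) (butlast G2) @ gsw 0 True (Suc (Suc (Suc m))) [last G2]"
    by (subst split) (simp only: gsw_append ob if_False not_False_eq_True)
  also have "gsw 0 True (Suc (Suc (Suc m))) [last G2] =
     map (\<lambda>p. ins p (Suc (Suc (Suc m))) (Suc (Suc m) # Suc m # \<sigma>)) (rev [0..<Suc (Suc (Suc m))])"
    using lG2 assms by (simp add: posl_def)
  finally show ?thesis by blast
qed

lemma perm_cover: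
  assumes "distinct L" "length L = fact m" "\<forall>w\<in>set L. is_perm_word m w"
  shows "\<forall>w. is_perm_word m w \<longrightarrow> w \<in> set L"
proof -
  have sub: "set L \<subseteq> permutations_of_set {1..m}"
    using assms(3) by (auto simp: is_perm_word_def permutations_of_set_def)
  have "card (set L) = fact m" using assms(1,2) distinct_card by metis
  moreover have "card (permutations_of_set {1..m}) = fact m" by simp
  moreover have "finite (permutations_of_set {1..m})" by simp
  ultimately have "set L = permutations_of_set {1..m}" using sub card_subset_eq by metis
  then show ?thesis by (auto simp: is_perm_word_def permutations_of_set_def)
qed

lemma fact_plus3: "fact (m + 3) = fact m * (Suc m * Suc (Suc m) * Suc (Suc (Suc m)) :: nat)"
proof -
  have "fact (m + 3) = (Suc (Suc (Suc m)) * (Suc (Suc m) * (Suc m * fact m)) :: nat)"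
    by (simp add: numeral_3_eq_3 del: mult_Suc mult_Suc_right)
  then show ?thesis by (simp only: ac_simps)
qed

lemma P_base_step: "3 \<le> m \<Longrightarrow> P_base (m + 3) = Suc (Suc m) # Suc m # m # P_base m"
proof -
  assume m: "3 \<le> m"
  have "[3..<m + 3] = [3..<m] @ [m, Suc m, Suc (Suc m)]"
  proof -
    have "[3..<m + 3] = [3..<m] @ [m..<m + 3]" using m by (rule upt_add_eq_append)
    moreover have "[m..<m + 3] = [m, Suc m, Suc (Suc m)]" by (simp add: numeral_3_eq_3)
    ultimately show ?thesis by simp
  qed
  then show ?thesis unfolding P_base_def by simp
qed

lemma construct:
  fixes m :: nat and S :: "nat list list"
  assumes rg: "reverse_gray_code m S" and om: "odd m" and m5: "5 \<le> m"
    and s0: "S ! 0 = [1..<Suc m]" and sl: "S ! (fact m div 2 - 1) = m # P_base m"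
  shows "\<exists>L. reverse_gray_code (m + 3) L \<and> property_P (m + 3) L"
proof -
  define K where "K = (fact m :: nat)"
  define h where "h = K div 2"
  define B where "B = Suc m * Suc (Suc m) * Suc (Suc (Suc m))"
  have lenS: "length S = K" using rg unfolding reverse_gray_code_def K_def by auto
  have dS: "distinct S" and pS: "\<forall>w\<in>set S. is_perm_word m w"
    and aS: "\<forall>i. Suc i < length S \<longrightarrow> adj_transp (S ! i) (S ! Suc i)"
    and rS: "\<forall>i < h. S ! (i + h) = rev (S ! i)"
    using rg unfolding reverse_gray_code_def h_def K_def by auto
  have "fact 5 \<le> K" unfolding K_def using m5 by (rule fact_mono_nat)
  then have K120: "120 \<le> K" by (simp add: fact_numeral)
  have evK: "even K" unfolding K_def using m5 by (simp add: dvd_fact)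
  have Kh: "K = 2 * h" using evK unfolding h_def by simp
  have h8: "8 \<le> h" using K120 Kh by simp
  have Sj: "distinct (S ! j) \<and> set (S ! j) = {1..m} \<and> length (S ! j) = m" if "j < K" for j
  proof -
    have "S ! j \<in> set S" using that lenS by simp
    then have "is_perm_word m (S ! j)" using pS by blast
    then show ?thesis unfolding is_perm_word_def using len_sigma by blast
  qed
  define bl where "bl j = blk m j (S ! j)" for j
  define H where "H = concat (map bl [0..<h])"
  have BPj: "BP m (S ! j) (bl j)" if "j < h" for j
    unfolding bl_def using Sj[of j] that Kh om by (intro BP_blk) auto
  have Bpos: "0 < B" unfolding B_def by simp
  have lenH: "length H = h * B" unfolding H_def
    by (rule length_concat_blocks) (use BPj in \<open>auto simp: BP_def B_def\<close>)
  have blne: "bl j \<noteq> []" if "j < h" for j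
    using BPj[OF that] Bpos unfolding BP_def B_def by auto
  have filt: "filter (\<lambda>k. k \<le> m) w = S ! j \<and> is_perm_word (m + 3) w" if "j < h" "w \<in> set (bl j)" for j w
    using BPj[OF that(1)] that(2) unfolding BP_def by auto
  have wH: "\<exists>j<h. w \<in> set (bl j)" if "w \<in> set H" for w
    using that unfolding H_def by auto
  have Sinj: "i = j" if "i < K" "j < K" "S ! i = S ! j" for i j
    using dS that lenS nth_eq_iff_index_eq by metis
  have dH: "distinct H" unfolding H_def
  proof (rule distinct_concat_blocks)
    show "\<forall>j<h. distinct (bl j)" using BPj unfolding BP_def by auto
    show "\<forall>i j. i < j \<longrightarrow> j < h \<longrightarrow> set (bl i) \<inter> set (bl j) = {}"
    proof (intro allI impI)
      fix i j assume ij: "i < j" "j < h"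
      show "set (bl i) \<inter> set (bl j) = {}"
      proof (rule ccontr)
        assume "set (bl i) \<inter> set (bl j) \<noteq> {}"
        then obtain w where "w \<in> set (bl i)" "w \<in> set (bl j)" by blast
        then have "S ! i = S ! j" using filt ij by (metis order.strict_trans)
        then show False using Sinj[of i j] ij Kh by simp
      qed
    qed
  qed
  have sH: "successively adj_transp H" unfolding H_def
  proof (rule succ_concat_blocks)
    show "\<forall>j<h. bl j \<noteq> [] \<and> successively adj_transp (bl j)" using BPj blne unfolding BP_def by auto
    show "\<forall>j. Suc j < h \<longrightarrow> adj_transp (last (bl j)) (hd (bl (Suc j)))"
    proof (intro allI impI)
      fix j assume j: "Suc j < h"
      have "adj_transp (S ! j) (S ! Suc j)" using aS j lenS Kh by simp
      then show "adj_transp (last (bl j)) (hd (bl (Suc j)))"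
        unfolding bl_def using trans_blk[of "S ! j" m] Sj[of j] j Kh om by simp
    qed
  qed
  obtain h' where h': "h = Suc h'" using h8 by (cases h) auto
  have oh': "odd h'" using Kh h' om m5 evK
  proof -
    have "4 dvd K" unfolding K_def using m5 by (simp add: dvd_fact)
    then show ?thesis using Kh h' by presburger
  qed
  have h'7: "7 \<le> h'" using h8 h' by simp
  have bl_last: "bl h' = nest (Suc m) (Suc (Suc m)) (Suc (Suc (Suc m))) True False False (S ! h')"
    unfolding bl_def blk_def Let_def using oh' h'7 by auto
  have Sh': "S ! h' = m # P_base m" using sl h' unfolding h_def K_def by simp
  have lenSh': "length (S ! h') = m" using Sj[of h'] h' Kh by simp
  obtain pre where pre: "bl h' = pre @ map (\<lambda>p. ins p (Suc (Suc (Suc m))) (Suc (Suc m) # Suc m # S ! h')) (rev [0..<Suc (Suc (Suc m))])"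
    using F_tail[OF lenSh' om] bl_last by auto
  define pre' where "pre' = concat (map bl [0..<h']) @ pre"
  have Hsplit: "H = pre' @ map (\<lambda>p. ins p (Suc (Suc (Suc m))) (Suc (Suc m) # Suc m # S ! h')) (rev [0..<Suc (Suc (Suc m))])"
    unfolding H_def pre'_def h' by (simp del: upt_Suc add: concat_upt_Suc pre)
  have hdH: "hd H = S ! 0 @ [Suc m, Suc (Suc m), Suc (Suc (Suc m))]"
    unfolding H_def using hd_concat_blocks[of h bl] blne h8 hd_blk0[of "S ! 0" m] Sj[of 0] Kh
    by (simp add: bl_def)
  have lastH: "last H = [Suc (Suc (Suc m)), Suc (Suc m), Suc m] @ S ! h'"
  proof -
    have "last H = last (bl h')" unfolding H_def h' by (rule last_concat_blocks) (use blne h' in simp)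
    also have "\<dots> = fst (Ends m h') @ S ! h' @ snd (Ends m h')"
      unfolding bl_def using last_blk[OF lenSh' om] .
    finally show ?thesis using oh' h'7 by (simp add: Ends_def)
  qed
  define L where "L = H @ map rev H"
  have lenL: "length L = fact (m + 3)"
    unfolding L_def using lenH fact_plus3[of m] Kh unfolding K_def B_def by simp
  have half: "fact (m + 3) div 2 = length H"
    using lenH fact_plus3[of m] Kh unfolding K_def B_def by simp
  have wL: "is_perm_word (m + 3) w" if "w \<in> set L" for w
  proof -
    have pH: "is_perm_word (m + 3) v" if "v \<in> set H" for v using wH[OF that] filt by blast
    show ?thesis using that unfolding L_def
      by (auto dest: pH simp: is_perm_word_def)
  qed
  have dL: "distinct L"
  proof -
    have "set H \<inter> set (map rev H) = {}"
    proof (rule ccontr)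
      assume "\<not> ?thesis"
      then obtain w v where wv: "w \<in> set H" "v \<in> set H" "w = rev v" by auto
      obtain i where i: "i < h" "w \<in> set (bl i)" using wH[OF wv(1)] by blast
      obtain j where j: "j < h" "v \<in> set (bl j)" using wH[OF wv(2)] by blast
      have "S ! i = filter (\<lambda>k. k \<le> m) w" using filt i by simp
      also have "\<dots> = rev (filter (\<lambda>k. k \<le> m) v)" using wv(3) by (simp add: rev_filter)
      also have "\<dots> = rev (S ! j)" using filt j by simp
      also have "\<dots> = S ! (j + h)" using rS j by simp
      finally have "i = j + h" using Sinj[of i "j + h"] i j Kh by simp
      then show False using i by simp
    qed
    then show ?thesis unfolding L_def using dH by (simp add: distinct_map)
  qed
  have sL: "successively adj_transp L"
  proof -
    have s2: "successively adj_transp (map rev H)"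
      unfolding successively_map using sH by (rule successively_mono) (rule adj_rev)
    have Hne: "H \<noteq> []" using lenH h8 Bpos by auto
    have "S ! (0 + h) = rev (S ! 0)" using rS h8 by (metis gr0I not_numeral_le_zero)
    then have "rev (hd H) = [Suc (Suc (Suc m)), Suc (Suc m), Suc m] @ S ! h" using hdH by simp
    moreover have "adj_transp (S ! h') (S ! h)" using aS h' lenS Kh by simp
    ultimately have "adj_transp (last H) (hd (map rev H))"
      using lastH Hne adj_ctx[of "S ! h'" "S ! h" "[Suc (Suc (Suc m)), Suc (Suc m), Suc m]" "[]"]
      by (simp add: hd_map)
    then show ?thesis unfolding L_def successively_append_iff using sH s2 by simp
  qed
  have rgL: "reverse_gray_code (m + 3) L"
    unfolding reverse_gray_code_def
  proof (intro conjI)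
    show "length L = fact (m + 3)" by (rule lenL)
    show "distinct L" by (rule dL)
    show "\<forall>w\<in>set L. is_perm_word (m + 3) w" using wL by blast
    then show "\<forall>w. is_perm_word (m + 3) w \<longrightarrow> w \<in> set L" using perm_cover dL lenL by blast
    show "\<forall>i. Suc i < length L \<longrightarrow> adj_transp (L ! i) (L ! Suc i)" using sL successively_conv_nth by blast
    show "\<forall>i<fact (m + 3) div 2. L ! (i + fact (m + 3) div 2) = rev (L ! i)"
      unfolding half L_def by (simp add: nth_append)
  qed
  have PL: "property_P (m + 3) L"
    unfolding property_P_def
  proof (intro conjI allI impI)
    have Hne: "H \<noteq> []" using lenH h8 Bpos by auto
    have "L ! 0 = hd H" unfolding L_def using Hne by (simp add: hd_conv_nth nth_append)
    also have "\<dots> = [1..<Suc (m + 3)]" using hdH s0 by (simp add: numeral_3_eq_3)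
    finally show "L ! 0 = [1..<Suc (m + 3)]" .
  next
    fix k :: nat assume k: "k < 4"
    have idx: "fact (m + 3) div 2 - 1 - k = length pre' + Suc (Suc m) - k"
      unfolding half Hsplit by simp
    have "L ! (fact (m + 3) div 2 - 1 - k) = H ! (length pre' + Suc (Suc m) - k)"
      unfolding L_def idx using lenH half k m5 Hsplit by (simp add: nth_append)
    also have "\<dots> = ins k (Suc (Suc (Suc m))) (Suc (Suc m) # Suc m # S ! h')"
      unfolding Hsplit by (rule nth_from_end) (use k m5 in simp)
    also have "\<dots> = take k (P_base (m + 3)) @ (m + 3) # drop k (P_base (m + 3))"
      using P_base_step[of m] m5 Sh' by (simp add: ins_def numeral_3_eq_3)
    finally show "L ! (fact (m + 3) div 2 - 1 - k) = take k (P_base (m + 3)) @ (m + 3) # drop k (P_base (m + 3))" .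
  qed
  show ?thesis using rgL PL by blast
qed

definition lswap :: "nat \<Rightarrow> nat list \<Rightarrow> nat list" where
  "lswap m w = w[m - 2 := w ! (m - 1), m - 1 := w ! (m - 2)]"

lemma adj_last: assumes "adj_transp w v" "v \<noteq> lswap (length w) w" shows "last v = last w"
proof -
  obtain i where i: "Suc i < length w" "v = w[i := w ! Suc i, Suc i := w ! i]"
    using assms(1) by (auto simp: adj_transp_def)
  have "i \<noteq> length w - 2"
  proof
    assume e: "i = length w - 2"
    then have "Suc i = length w - 1" using i(1) by linarith
    then have "v = lswap (length w) w" using i(2) e unfolding lswap_def by simp
    then show False using assms(2) by simp
  qed
  then have "Suc i < length w - 1" using i by linarith
  then have "v ! (length w - 1) = w ! (length w - 1)" using i by (simp add: nth_list_update)
  moreover have "w \<noteq> []" "v \<noteq> []" "length v = length w" using i by auto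
  ultimately show ?thesis by (simp add: last_conv_nth)
qed

lemma rg_facts:
  assumes "reverse_gray_code m L"
  shows "length L = fact m" "distinct L" "\<forall>w\<in>set L. is_perm_word m w" "\<forall>w. is_perm_word m w \<longrightarrow> w \<in> set L"
    "\<forall>i. Suc i < length L \<longrightarrow> adj_transp (L ! i) (L ! Suc i)"
    "\<forall>i < fact m div 2. L ! (i + fact m div 2) = rev (L ! i)"
  using assms unfolding reverse_gray_code_def by blast+

lemma exists_last_swap:
  assumes rg: "reverse_gray_code m L" and m2: "2 \<le> m"
  shows "\<exists>j < fact m div 2. L ! Suc j = lswap m (L ! j)"
proof (rule ccontr)
  assume na: "\<not> ?thesis"
  note f = rg_facts[OF rg]
  define h where "h = (fact m :: nat) div 2"
  have evK: "even (fact m :: nat)" using dvd_fact[of 2 m] m2 by simp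
  have "fact 2 \<le> (fact m :: nat)" using m2 by (rule fact_mono_nat)
  then have hpos: "0 < h" unfolding h_def by simp
  have Kh: "fact m = 2 * h" unfolding h_def using evK by simp
  have lw: "length (L ! j) = m" if "j < fact m" for j
  proof -
    have "L ! j \<in> set L" using f(1) that by simp
    then have "is_perm_word m (L ! j)" using f(3) by blast
    then show ?thesis unfolding is_perm_word_def using len_sigma by blast
  qed
  have "last (L ! j) = last (L ! 0)" if "j \<le> h" for j
    using that
  proof (induction j)
    case (Suc j)
    have a: "adj_transp (L ! j) (L ! Suc j)" using f(1,5) Suc.prems Kh by simp
    have jh: "j < h" using Suc.prems by simp
    have "L ! Suc j \<noteq> lswap m (L ! j)" using na jh unfolding h_def by blast
    moreover have "length (L ! j) = m" using lw[of j] jh Kh by simp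
    ultimately have "L ! Suc j \<noteq> lswap (length (L ! j)) (L ! j)" by simp
    then have "last (L ! Suc j) = last (L ! j)" using adj_last[OF a] by blast
    moreover have "last (L ! j) = last (L ! 0)" using Suc.IH jh by simp
    ultimately show ?case by simp
  qed simp
  then have l0: "last (L ! h) = last (L ! 0)" by blast
  have "L ! (0 + h) = rev (L ! 0)" using f(6) hpos unfolding h_def by blast
  then have lh: "L ! h = rev (L ! 0)" by simp
  define x where "x = L ! 0"
  have x0: "x \<in> set L" using f(1) Kh hpos unfolding x_def by simp
  then have dx: "distinct x" "length x = m" using f(3) lw[of 0] Kh hpos unfolding is_perm_word_def x_def by auto
  have ne: "x \<noteq> []" using dx m2 by auto
  have "last (rev x) = hd x" by (rule last_rev)
  then have "hd x = last x" using l0 lh unfolding x_def by simp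
  then have "x ! 0 = x ! (length x - 1)" using ne by (simp add: hd_conv_nth last_conv_nth)
  then have "x ! 0 = x ! (m - 1)" using dx(2) by simp
  moreover have "0 < length x" "m - 1 < length x" "0 \<noteq> m - 1" using m2 dx(2) by auto
  ultimately show False using nth_eq_iff_index_eq[OF dx(1), of 0 "m - 1"] by simp
qed

lemma rotate_rg:
  assumes rg: "reverse_gray_code m L" and m2: "2 \<le> m"
  shows "reverse_gray_code m (rotate s L)" "\<forall>i<fact m. rotate s L ! i = L ! ((s + i) mod fact m)"
proof -
  note f = rg_facts[OF rg]
  define K where "K = (fact m :: nat)"
  define h where "h = K div 2"
  have evK: "even K" unfolding K_def using dvd_fact[of 2 m] m2 by simp
  have "fact 2 \<le> K" unfolding K_def using m2 by (rule fact_mono_nat)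
  then have hpos: "0 < h" unfolding h_def by simp
  have Kh: "K = 2 * h" unfolding h_def using evK by simp
  have lenL: "length L = K" using f(1) K_def by simp
  have f6: "L ! (i + h) = rev (L ! i)" if "i < h" for i using f(6) that unfolding h_def K_def by blast
  have rc: "L ! ((i + h) mod K) = rev (L ! i)" if "i < K" for i
  proof (cases "i < h")
    case True
    then have "(i + h) mod K = i + h" using Kh by simp
    then show ?thesis using f6[OF True] by simp
  next
    case False
    have e1: "i + h = (i - h) + K" using False Kh by simp
    have e2: "i - h < K" using that by simp
    have e: "(i + h) mod K = i - h" unfolding e1 using e2 by simp
    have "i - h < h" using False that Kh by simp
    then have "L ! (i - h + h) = rev (L ! (i - h))" by (rule f6)
    then have "L ! i = rev (L ! (i - h))" using False by simp
    then show ?thesis using e by simp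
  qed
  have ac: "adj_transp (L ! i) (L ! (Suc i mod K))" if "i < K" for i
  proof (cases "Suc i < K")
    case True
    then show ?thesis using f(5) lenL by simp
  next
    case False
    then have si: "Suc i = K" using that by simp
    then have i: "i = (h - 1) + h" "Suc i mod K = 0" using Kh hpos by auto
    have "Suc (h - 1) < length L" using lenL Kh hpos by simp
    then have "adj_transp (L ! (h - 1)) (L ! Suc (h - 1))" using f(5) by blast
    then have a: "adj_transp (L ! (h - 1)) (L ! h)" using hpos by simp
    have "L ! i = rev (L ! (h - 1))" using f6[of "h - 1"] hpos i(1) by simp
    moreover have "L ! h = rev (L ! 0)" using f6[of 0] hpos by simp
    ultimately show ?thesis using adj_rev[OF a] i(2) by simp
  qed
  define R where "R = rotate s L"
  have Ri: "R ! i = L ! ((s + i) mod K)" if "i < K" for i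
    unfolding R_def using nth_rotate[of i L s] that lenL by simp
  show "\<forall>i<fact m. rotate s L ! i = L ! ((s + i) mod fact m)" using Ri unfolding R_def K_def by blast
  show "reverse_gray_code m (rotate s L)"
    unfolding reverse_gray_code_def R_def[symmetric]
  proof (intro conjI allI impI)
    show "length R = fact m" using lenL K_def R_def by simp
    show "distinct R" using f(2) R_def by simp
    show "\<forall>w\<in>set R. is_perm_word m w" using f(3) R_def by simp
    show "\<And>w. is_perm_word m w \<Longrightarrow> w \<in> set R" using f(4) R_def by simp
  next
    fix i assume i: "Suc i < length R"
    then have iK: "Suc i < K" using lenL R_def by simp
    have "(s + Suc i) mod K = Suc ((s + i) mod K) mod K" by (simp add: mod_Suc_eq)
    then have "R ! Suc i = L ! (Suc ((s + i) mod K) mod K)" using Ri[OF iK] by simp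
    moreover have "(s + i) mod K < K" using Kh hpos by simp
    ultimately show "adj_transp (R ! i) (R ! Suc i)" using ac Ri iK by simp
  next
    fix i :: nat assume i: "i < fact m div 2"
    then have ih: "i < h" unfolding h_def K_def .
    have "R ! (i + h) = L ! ((s + (i + h)) mod K)" using Ri ih Kh by simp
    also have "(s + (i + h)) mod K = ((s + i) mod K + h) mod K" by (simp add: mod_add_left_eq add.assoc)
    also have "L ! \<dots> = rev (L ! ((s + i) mod K))" using rc Kh hpos by simp
    also have "\<dots> = rev (R ! i)" using Ri ih Kh by simp
    finally show "R ! (i + fact m div 2) = rev (R ! i)" unfolding h_def K_def .
  qed
qed

lemma relabel_rg:
  assumes rg: "reverse_gray_code m L" and inj: "inj_on \<tau> {1..m}" and im: "\<tau> ` {1..m} = {1..m}"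
  shows "reverse_gray_code m (map (map \<tau>) L)"
proof -
  note f = rg_facts[OF rg]
  define R where "R = map (map \<tau>) L"
  have pw: "is_perm_word m (map \<tau> w)" if "is_perm_word m w" for w
    using that inj im unfolding is_perm_word_def by (simp add: distinct_map)
  have injm: "inj_on (map \<tau>) (set L)"
  proof (rule inj_onI)
    fix v w assume vw: "v \<in> set L" "w \<in> set L" "map \<tau> v = map \<tau> w"
    have "set v \<union> set w = {1..m}" using vw f(3) unfolding is_perm_word_def by auto
    then show "v = w" using map_inj_on[OF vw(3)] inj by simp
  qed
  have dR: "distinct R" unfolding R_def using f(2) injm by (simp add: distinct_map)
  have lR: "length R = fact m" unfolding R_def using f(1) by simp
  have wR: "\<forall>w\<in>set R. is_perm_word m w" unfolding R_def using f(3) pw by auto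
  show ?thesis unfolding R_def[symmetric] reverse_gray_code_def
  proof (intro conjI allI impI)
    show "length R = fact m" by (rule lR)
    show "distinct R" by (rule dR)
    show "\<forall>w\<in>set R. is_perm_word m w" by (rule wR)
    show "\<And>w. is_perm_word m w \<Longrightarrow> w \<in> set R" using perm_cover[OF dR lR wR] by blast
  next
    fix i assume "Suc i < length R"
    then show "adj_transp (R ! i) (R ! Suc i)" using f(5) unfolding R_def by (simp add: adj_map)
  next
    fix i :: nat assume i: "i < fact m div 2"
    then have "i + fact m div 2 < length L" using f(1) by simp
    then show "R ! (i + fact m div 2) = rev (R ! i)" using f(6) i unfolding R_def by (simp add: rev_map)
  qed
qed

lemma lswap_map: "length w = m \<Longrightarrow> 2 \<le> m \<Longrightarrow> map f (lswap m w) = lswap m (map f w)"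
  unfolding lswap_def by (simp add: map_update)

lemma lswap_lswap: "length w = m \<Longrightarrow> 2 \<le> m \<Longrightarrow> lswap m (lswap m w) = w"
  unfolding lswap_def by (rule nth_equalityI) (auto simp: nth_list_update)

lemma lswap_rev: assumes "3 \<le> m" shows "lswap m (rev [1..<Suc m]) = m # P_base m"
proof -
  have u: "[1..<Suc m] = [1, 2] @ [3..<m] @ [m]"
  proof -
    have "[1..<Suc m] = [1..<3] @ [3..<Suc m]" using assms upt_add_eq_append[of 1 3 "m - 2"] by simp
    moreover have "[3..<Suc m] = [3..<m] @ [m]" using assms by simp
    moreover have "[1..<3] = [1, 2::nat]" by (simp add: numeral_3_eq_3)
    ultimately show ?thesis by simp
  qed
  define xs where "xs = m # rev [3..<m]"
  have lx: "length xs = m - 2" using assms unfolding xs_def by simp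
  have r: "rev [1..<Suc m] = xs @ [2, 1]" unfolding u xs_def by simp
  have "lswap m (xs @ [2, 1]) = xs @ [1, 2]"
    unfolding lswap_def using lx assms by (simp add: list_update_append nth_append numeral_2_eq_2)
  then show ?thesis unfolding r xs_def P_base_def by simp
qed

lemma normalize:
  assumes rg: "reverse_gray_code m L" and m3: "3 \<le> m"
  shows "\<exists>S. reverse_gray_code m S \<and> S ! 0 = [1..<Suc m] \<and> S ! (fact m div 2 - 1) = m # P_base m"
proof -
  have m2: "2 \<le> m" using m3 by simp
  define K where "K = (fact m :: nat)"
  define h where "h = K div 2"
  have evK: "even K" unfolding K_def using dvd_fact[of 2 m] m2 by simp
  have "fact 2 \<le> K" unfolding K_def using m2 by (rule fact_mono_nat)
  then have hpos: "0 < h" unfolding h_def by simp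
  have Kh: "K = 2 * h" unfolding h_def using evK by simp
  obtain j where j: "j < h" "L ! Suc j = lswap m (L ! j)"
    using exists_last_swap[OF rg m2] unfolding h_def K_def by blast
  define s where "s = (Suc j + h) mod K"
  define R where "R = rotate s L"
  have rgR: "reverse_gray_code m R" unfolding R_def by (rule rotate_rg(1)[OF rg m2])
  have Ri: "R ! i = L ! ((s + i) mod K)" if "i < K" for i
    using rotate_rg(2)[OF rg m2, of s] that unfolding R_def K_def by blast
  have "(s + (h - 1)) mod K = j"
  proof -
    have "(s + (h - 1)) mod K = (Suc j + h + (h - 1)) mod K" unfolding s_def by (simp add: mod_add_left_eq)
    also have "Suc j + h + (h - 1) = j + K" using Kh hpos by simp
    also have "(j + K) mod K = j mod K" by (rule mod_add_self2)
    also have "j mod K = j" using j Kh hpos by simp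
    finally show ?thesis .
  qed
  then have Rh1: "R ! (h - 1) = L ! j" using Ri[of "h - 1"] Kh hpos by simp
  have "(s + h) mod K = Suc j"
  proof -
    have "(s + h) mod K = (Suc j + h + h) mod K" unfolding s_def by (simp add: mod_add_left_eq)
    also have "Suc j + h + h = Suc j + K" using Kh by simp
    also have "(Suc j + K) mod K = Suc j mod K" by (rule mod_add_self2)
    also have "Suc j mod K = Suc j" using j Kh hpos by simp
    finally show ?thesis .
  qed
  then have Rh: "R ! h = L ! Suc j" using Ri[of h] Kh hpos by simp
  note fR = rg_facts[OF rgR]
  define \<sigma>0 where "\<sigma>0 = R ! 0"
  have "0 < length R" using fR(1) Kh hpos K_def by simp
  then have "R ! 0 \<in> set R" by simp
  then have p0: "is_perm_word m \<sigma>0" unfolding \<sigma>0_def using fR(3) by blast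
  then have d0: "distinct \<sigma>0" "set \<sigma>0 = {1..m}" "length \<sigma>0 = m"
    unfolding is_perm_word_def using len_sigma by auto
  have bij: "bij_betw ((!) \<sigma>0) {..<m} {1..m}" using bij_betw_nth[OF d0(1)] d0 by simp
  then have injn: "inj_on ((!) \<sigma>0) {..<m}" and imn: "(!) \<sigma>0 ` {..<m} = {1..m}" by (auto simp: bij_betw_def)
  define \<tau> where "\<tau> x = Suc (the_inv_into {..<m} ((!) \<sigma>0) x)" for x
  have tau_nth: "\<tau> (\<sigma>0 ! i) = Suc i" if "i < m" for i
    unfolding \<tau>_def using the_inv_into_f_f[OF injn] that by simp
  have inj: "inj_on \<tau> {1..m}"
  proof -
    have i2: "inj_on (the_inv_into {..<m} ((!) \<sigma>0)) {1..m}" using inj_on_the_inv_into[OF injn] unfolding imn .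
    show ?thesis
    proof (rule inj_onI)
      fix a b assume ab: "a \<in> {1..m}" "b \<in> {1..m}" "\<tau> a = \<tau> b"
      then have "the_inv_into {..<m} ((!) \<sigma>0) a = the_inv_into {..<m} ((!) \<sigma>0) b" unfolding \<tau>_def by simp
      then show "a = b" using inj_onD[OF i2] ab by blast
    qed
  qed
  have im: "\<tau> ` {1..m} = {1..m}"
  proof -
    have e: "the_inv_into {..<m} ((!) \<sigma>0) ` {1..m} = {..<m}" using the_inv_into_onto[OF injn] unfolding imn .
    have "\<tau> ` {1..m} = Suc ` (the_inv_into {..<m} ((!) \<sigma>0) ` {1..m})" unfolding \<tau>_def by (rule image_image[symmetric])
    then have "\<tau> ` {1..m} = Suc ` {..<m}" unfolding e .
    then show ?thesis by (simp add: image_Suc_lessThan)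
  qed
  define S where "S = map (map \<tau>) R"
  have rgS: "reverse_gray_code m S" unfolding S_def by (rule relabel_rg[OF rgR inj im])
  have lenR: "length R = K" using fR(1) K_def by simp
  have S0: "S ! 0 = [1..<Suc m]"
  proof -
    have "S ! 0 = map \<tau> \<sigma>0" unfolding S_def \<sigma>0_def using lenR Kh hpos by simp
    also have "\<dots> = [1..<Suc m]" by (rule nth_equalityI) (simp_all add: d0 tau_nth del: upt_Suc)
    finally show ?thesis .
  qed
  have "S ! (0 + h) = rev (S ! 0)" using rg_facts(6)[OF rgS] hpos unfolding h_def K_def by blast
  then have Sh: "S ! h = rev [1..<Suc m]" using S0 by simp
  have lj: "length (L ! j) = m"
  proof -
    have "L ! j \<in> set L" using rg_facts(1)[OF rg] j Kh K_def by simp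
    then show ?thesis using rg_facts(3)[OF rg] len_sigma unfolding is_perm_word_def by blast
  qed
  have "S ! h = map \<tau> (lswap m (L ! j))" unfolding S_def using lenR Kh hpos Rh j by simp
  also have "\<dots> = lswap m (map \<tau> (L ! j))" using lswap_map[OF lj m2] .
  also have "map \<tau> (L ! j) = S ! (h - 1)" unfolding S_def using lenR Kh hpos Rh1 by simp
  finally have sw: "S ! h = lswap m (S ! (h - 1))" .
  have lS: "length (S ! (h - 1)) = m" unfolding S_def using lenR Kh hpos Rh1 lj by simp
  have "S ! (h - 1) = lswap m (S ! h)" unfolding sw using lswap_lswap[OF lS m2] by simp
  then have "S ! (h - 1) = m # P_base m" using Sh lswap_rev[OF m3] by simp
  then show ?thesis using rgS S0 unfolding h_def K_def by blast
qed

theorem theorem8: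
  fixes n :: nat
  assumes "n mod 4 = 0" and "n \<ge> 8"
    and "\<exists>L. reverse_gray_code (n - 3) L"
  shows "\<exists>L. reverse_gray_code n L \<and> property_P n L"
proof -
  obtain L where L: "reverse_gray_code (n - 3) L" using assms(3) by blast
  define m where "m = n - 3"
  have m5: "5 \<le> m" using assms(2) m_def by simp
  have om: "odd m" using assms(1,2) m_def by presburger
  obtain S where S: "reverse_gray_code m S" "S ! 0 = [1..<Suc m]" "S ! (fact m div 2 - 1) = m # P_base m"
    using normalize[of m L] L m5 m_def by auto
  have "\<exists>L. reverse_gray_code (m + 3) L \<and> property_P (m + 3) L" by (rule construct[OF S(1) om m5 S(2,3)])
  moreover have "m + 3 = n" using assms(2) m_def by simp
  ultimately show ?thesis by simp
qed

end
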